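(* Let $p$ be an odd prime, let $d>1$ be an integer, and let $q$ be an even power of $p$ with $q \equiv 1 \pmod{2d}$. Then the clique number of the generalized Paley graph $GP(q,d)$ satisfies $\omega\big(GP(q,d)\big)=\sqrt{q}$ if and only if $d \mid (\sqrt{q}+1)$. In particular, if $d \nmid (\sqrt{q}+1)$, then $\omega\big(GP(q,d)\big) \leq \sqrt{q}-1$.
   Context: For a prime power $q$ and an integer $d>1$ with $d \mid q-1$, the $d$-Paley graph $GP(q,d)$ is the graph with vertex set $\mathbb{F}_q$ in which two distinct vertices $x,y$ are adjacent if and only if $x-y$ is a $d$-th power in $\mathbb{F}_q^*$. $\omega(X)$ denotes the clique number (size of a largest clique) of a graph $X$. *)

theory Defs
  imports "HOL-Number_Theory.Number_Theory"
begin

definition dth_powers :: "nat \<Rightarrow> 'a::{field,finite} set" where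
  "dth_powers d = {y. \<exists>x. x \<noteq> 0 \<and> y = x ^ d}"

definition paley_adj :: "nat \<Rightarrow> 'a::{field,finite} \<Rightarrow> 'a \<Rightarrow> bool" where
  "paley_adj d x y \<longleftrightarrow> x \<noteq> y \<and> x - y \<in> dth_powers d"

definition paley_clique :: "nat \<Rightarrow> 'a::{field,finite} set \<Rightarrow> bool" where
  "paley_clique d C \<longleftrightarrow> (\<forall>x\<in>C. \<forall>y\<in>C. x \<noteq> y \<longrightarrow> paley_adj d x y)"

definition paley_clique_number :: "'a::{field,finite} itself \<Rightarrow> nat \<Rightarrow> nat" where
  "paley_clique_number TYPE('a) d = Max {card C | C :: 'a set. paley_clique d C}"

end

theory Submission
  imports Defs "HOL-Algebra.Multiplicative_Group"
begin

definition tring :: "'a::field ring" where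
  "tring = \<lparr>carrier = UNIV, monoid.mult = (\<lambda>x y. x * y), one = 1, ring.zero = 0, add = (\<lambda>x y. x + y)\<rparr>"

lemma field_tring: "field (tring :: 'a::field ring)"
proof -
  have "\<exists>y. x + y = 0" for x :: 'a
    using add.right_inverse by blast
  moreover have "x \<noteq> 0 \<Longrightarrow> \<exists>y. x * y = 1" for x :: 'a
    by (rule exI[of _ "inverse x"]) auto
  ultimately show ?thesis
    unfolding tring_def using add.right_inverse
    by unfold_locales (auto simp:algebra_simps Units_def)
qed

lemma tring_pow: "x [^]\<^bsub>tring\<^esub> (n::nat) = (x::'a::field) ^ n"
  by (induction n) (simp_all add: tring_def mult.commute)

lemma exists_gen: "\<exists>g::'a::{field,finite}. g \<noteq> 0 \<and> (\<forall>x. x \<noteq> 0 \<longrightarrow> (\<exists>i. x = g ^ i))"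
proof -
  interpret F: field "tring :: 'a ring" by (rule field_tring)
  have "finite (carrier (tring :: 'a ring))" by simp
  from F.finite_field_mult_group_has_gen[OF this] obtain a where a: "a \<in> carrier (mult_of (tring::'a ring))" and
    "carrier (mult_of (tring::'a ring)) = {a [^]\<^bsub>tring\<^esub> i | i::nat. i \<in> UNIV}" by blast
  hence e: "UNIV - {0::'a} = {a ^ i | i::nat. True}"
    by (simp add: tring_pow) (simp add: tring_def)
  have "x \<noteq> 0 \<Longrightarrow> \<exists>i. x = a ^ i" for x :: 'a
  proof -
    assume "x \<noteq> 0"
    hence "x \<in> UNIV - {0::'a}" by simp
    thus ?thesis unfolding e by simp
  qed
  moreover have "a \<noteq> 0" using a by (simp add: tring_def)
  ultimately show ?thesis by (intro exI[of _ a]) simp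
qed

lemma pow_card_minus_one:
  fixes x :: "'a::{field,finite}"
  assumes "x \<noteq> 0"
  shows "x ^ (card (UNIV :: 'a set) - 1) = 1"
proof -
  have "(\<Prod>y\<in>UNIV-{0}. x * y) = x ^ (card (UNIV :: 'a set) - 1) * \<Prod>(UNIV-{0::'a})"
    by (simp add: prod.distrib mult_ac)
  also have "(\<Prod>y\<in>UNIV-{0}. x * y) = (\<Prod>y\<in>UNIV-{0}. y)"
    by (rule prod.reindex_bij_witness[of _ "\<lambda>y. y / x" "\<lambda>y. x * y"]) (use assms in auto)
  finally have "x ^ (card (UNIV :: 'a set) - 1) * \<Prod>(UNIV-{0::'a}) = 1 * \<Prod>(UNIV-{0::'a})" by simp
  moreover have "\<Prod>(UNIV-{0::'a}) \<noteq> 0" by (simp add: prod_zero_iff)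
  ultimately show ?thesis by (metis mult_right_cancel)
qed

locale gfield =
  fixes g :: "'a::{field,finite}" and d :: nat
  assumes g0: "g \<noteq> 0" and gen: "\<And>x. x \<noteq> 0 \<Longrightarrow> \<exists>i. x = g ^ i"
    and dN: "d dvd (card (UNIV::'a set) - 1)" and dpos: "d > 0"
begin

lemma N_pos: "card (UNIV::'a set) - 1 > 0"
proof -
  have "card {0::'a, 1} \<le> card (UNIV::'a set)" by (rule card_mono) auto
  thus ?thesis by simp
qed

lemma g_pow_N: "g ^ (card (UNIV::'a set) - 1) = 1"
  using pow_card_minus_one[OF g0] .

lemma g_pow_mod: "g ^ i = g ^ (i mod (card (UNIV::'a set) - 1))"
proof -
  have "g ^ i = g ^ ((card (UNIV::'a set) - 1) * (i div (card (UNIV::'a set) - 1)) + i mod (card (UNIV::'a set) - 1))" by simp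
  also have "\<dots> = g ^ (i mod (card (UNIV::'a set) - 1))"
    by (simp only: power_add power_mult g_pow_N) simp
  finally show ?thesis .
qed

lemma g_img: "(\<lambda>i. g ^ i) ` {..<card (UNIV::'a set) - 1} = UNIV - {0}"
proof
  show "(\<lambda>i. g ^ i) ` {..<card (UNIV::'a set) - 1} \<subseteq> UNIV - {0}" using g0 by auto
  show "UNIV - {0} \<subseteq> (\<lambda>i. g ^ i) ` {..<card (UNIV::'a set) - 1}"
  proof
    fix x :: 'a assume "x \<in> UNIV - {0}"
    then obtain i where "x = g ^ i" using gen by auto
    hence "x = g ^ (i mod (card (UNIV::'a set) - 1))" using g_pow_mod by simp
    moreover have "i mod (card (UNIV::'a set) - 1) < card (UNIV::'a set) - 1" using N_pos by simp
    ultimately show "x \<in> (\<lambda>i. g ^ i) ` {..<card (UNIV::'a set) - 1}" by blast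
  qed
qed

lemma g_inj: "inj_on (\<lambda>i. g ^ i) {..<card (UNIV::'a set) - 1}"
proof (rule eq_card_imp_inj_on)
  show "card ((\<lambda>i. g ^ i) ` {..<card (UNIV::'a set) - 1}) = card {..<card (UNIV::'a set) - 1}"
    unfolding g_img by (simp add: card_Diff_singleton)
qed simp

lemma g_pow_eq: "g ^ i = g ^ j \<longleftrightarrow> i mod (card (UNIV::'a set) - 1) = j mod (card (UNIV::'a set) - 1)"
proof
  assume "g ^ i = g ^ j"
  hence "g ^ (i mod (card (UNIV::'a set) - 1)) = g ^ (j mod (card (UNIV::'a set) - 1))" using g_pow_mod by metis
  thus "i mod (card (UNIV::'a set) - 1) = j mod (card (UNIV::'a set) - 1)"
    using inj_onD[OF g_inj] N_pos by simp
next
  assume "i mod (card (UNIV::'a set) - 1) = j mod (card (UNIV::'a set) - 1)"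
  thus "g ^ i = g ^ j" using g_pow_mod by metis
qed

lemma g_pow_eq_d: "g ^ i = g ^ j \<Longrightarrow> i mod d = j mod d"
proof -
  assume "g ^ i = g ^ j"
  hence "i mod (card (UNIV::'a set) - 1) mod d = j mod (card (UNIV::'a set) - 1) mod d"
    using g_pow_eq by simp
  thus ?thesis using dN by (simp add: mod_mod_cancel)
qed

lemma D_char: "x \<in> dth_powers d \<longleftrightarrow> (\<exists>i. x = g ^ i \<and> d dvd i)"
proof
  assume "x \<in> dth_powers d"
  then obtain w where "w \<noteq> 0" "x = w ^ d" by (auto simp: dth_powers_def)
  then obtain l where "x = (g ^ l) ^ d" using gen by blast
  thus "\<exists>i. x = g ^ i \<and> d dvd i" by (auto simp: power_mult[symmetric])
next
  assume "\<exists>i. x = g ^ i \<and> d dvd i"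
  then obtain j where "x = g ^ (d * j)" by (auto elim!: dvdE)
  hence "x = (g ^ j) ^ d" by (simp add: power_mult[symmetric] mult.commute)
  thus "x \<in> dth_powers d" using g0 unfolding dth_powers_def by (intro CollectI exI[of _ "g^j"]) simp
qed

lemma gD: "g ^ i \<in> dth_powers d \<longleftrightarrow> d dvd i"
proof
  assume "g ^ i \<in> dth_powers d"
  then obtain j where "g ^ i = g ^ j" "d dvd j" using D_char by blast
  thus "d dvd i" using g_pow_eq_d by (metis dvd_eq_mod_eq_0)
qed (auto simp: D_char)

definition ind :: "'a \<Rightarrow> nat" where "ind x = (SOME i. x = g ^ i) mod d"

lemma ind_eq: "x = g ^ i \<Longrightarrow> ind x = i mod d"
proof -
  assume x: "x = g ^ i"
  hence "x = g ^ (SOME i. x = g ^ i)" by (metis (mono_tags) someI)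
  thus ?thesis unfolding ind_def using x g_pow_eq_d by metis
qed

lemma ind_lt: "ind x < d" using dpos by (simp add: ind_def)

lemma div_D_iff:
  assumes "u \<noteq> 0" "v \<noteq> 0"
  shows "u / v \<in> dth_powers d \<longleftrightarrow> ind u = ind v"
proof -
  obtain a where a: "u = g ^ a" using gen assms by blast
  obtain b where b: "v = g ^ b" using gen assms by blast
  define N where "N = card (UNIV::'a set) - 1"
  define b' where "b' = b mod N"
  have b'N: "b' < N" using N_pos unfolding b'_def N_def by simp
  have vb: "v = g ^ b'" using b g_pow_mod unfolding b'_def N_def by metis
  have "v * g ^ (N - b') = 1"
    using b'N g_pow_N unfolding vb N_def by (simp flip: power_add)
  hence "u / v = g ^ (a + (N - b'))" using assms a
    by (simp add: power_add field_simps)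
  hence "u / v \<in> dth_powers d \<longleftrightarrow> d dvd (a + (N - b'))" using gD by simp
  also have "\<dots> \<longleftrightarrow> a mod d = b' mod d"
  proof -
    have dN': "d dvd N" using dN unfolding N_def .
    have "int (a + (N - b')) = int a - int b' + int N" using b'N by simp
    hence "d dvd (a + (N - b')) \<longleftrightarrow> int d dvd (int a - int b' + int N)"
      by (metis int_dvd_int_iff)
    also have "\<dots> \<longleftrightarrow> int d dvd (int a - int b')"
      using dN' by (metis dvd_add_left_iff int_dvd_int_iff)
    also have "\<dots> \<longleftrightarrow> a mod d = b' mod d"
      by (metis mod_eq_dvd_iff of_nat_eq_iff zmod_int)
    finally show ?thesis .
  qed
  also have "b' mod d = b mod d" unfolding b'_def using dN unfolding N_def by (simp add: mod_mod_cancel)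
  finally show ?thesis using ind_eq a b by simp
qed

lemma in_D_iff_ind: "u \<noteq> 0 \<Longrightarrow> u \<in> dth_powers d \<longleftrightarrow> ind u = 0"
  using div_D_iff[of u 1] ind_eq[of 1 0] by simp

lemma card_D: "card (dth_powers d :: 'a set) = (card (UNIV::'a set) - 1) div d"
proof -
  define N where "N = card (UNIV::'a set) - 1"
  have dN': "d dvd N" using dN unfolding N_def .
  have "dth_powers d = (\<lambda>j. g ^ (d * j)) ` {..<N div d}"
  proof
    show "dth_powers d \<subseteq> (\<lambda>j. g ^ (d * j)) ` {..<N div d}"
    proof
      fix x assume "x \<in> (dth_powers d :: 'a set)"
      then obtain i where i: "x = g ^ i" "d dvd i" using D_char by blast
      then obtain l where l: "i = d * l" by blast
      have "x = g ^ (i mod N)" using i g_pow_mod unfolding N_def by metis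
      also have "i mod N = d * (l mod (N div d))" using l dN'
        by (metis dvd_mult_div_cancel mult_mod_right)
      finally have "x = g ^ (d * (l mod (N div d)))" .
      moreover have "l mod (N div d) < N div d" using N_pos dN' dpos unfolding N_def
        by (metis N_def dvd_div_eq_0_iff mod_less_divisor neq0_conv not_gr_zero)
      ultimately show "x \<in> (\<lambda>j. g ^ (d * j)) ` {..<N div d}" by blast
    qed
    show "(\<lambda>j. g ^ (d * j)) ` {..<N div d} \<subseteq> dth_powers d"
    proof
      fix x assume "x \<in> (\<lambda>j. g ^ (d * j)) ` {..<N div d}"
      then obtain j where "x = g ^ (d * j)" by blast
      thus "x \<in> dth_powers d" unfolding D_char by (intro exI[of _ "d*j"]) simp
    qed
  qed
  moreover have "inj_on (\<lambda>j. g ^ (d * j)) {..<N div d}"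
  proof
    fix i j assume ij: "i \<in> {..<N div d}" "j \<in> {..<N div d}" "g ^ (d * i) = g ^ (d * j)"
    have "d * i < N" "d * j < N" using ij(1,2) dN' dpos by (metis dvd_mult_div_cancel lessThan_iff mult_less_cancel1)+
    moreover have "(d * i) mod N = (d * j) mod N" using ij(3) g_pow_eq unfolding N_def by blast
    ultimately have "d * i = d * j" by simp
    thus "i = j" using dpos by simp
  qed
  ultimately show ?thesis unfolding N_def by (simp add: card_image)
qed

end


lemma cs_int:
  fixes f :: "'b \<Rightarrow> int"
  assumes "finite I"
  shows "(\<Sum>i\<in>I. f i)^2 \<le> int (card I) * (\<Sum>i\<in>I. (f i)^2)"
proof -
  have "(\<Sum>i\<in>I. \<Sum>j\<in>I. (f i - f j)^2) = (\<Sum>i\<in>I. \<Sum>j\<in>I. (f i)^2 + (f j)^2 - 2 * (f i * f j))"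
    by (simp add: power2_diff algebra_simps)
  also have "\<dots> = 2 * int (card I) * (\<Sum>i\<in>I. (f i)^2) - 2 * (\<Sum>i\<in>I. f i)^2"
    by (simp add: sum.distrib sum_subtractf sum_distrib_left sum_distrib_right power2_eq_square
        flip: sum_distrib_left)
  moreover have "0 \<le> (\<Sum>i\<in>I. \<Sum>j\<in>I. (f i - f j)^2)"
    by (intro sum_nonneg) simp
  ultimately have "0 \<le> 2 * int (card I) * (\<Sum>i\<in>I. (f i)^2) - 2 * (\<Sum>i\<in>I. f i)^2"
    by linarith
  thus ?thesis by simp
qed

lemma double_count:
  assumes "finite A" "finite B"
  shows "(\<Sum>x\<in>B. card {y\<in>A. P x y}) = (\<Sum>y\<in>A. card {x\<in>B. P x y})"
proof -
  have c: "card {y\<in>S. Q y} = (\<Sum>y\<in>S. if Q y then 1 else 0)" if "finite S" for S and Q :: "'c \<Rightarrow> bool"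
    using that by (simp add: sum.If_cases Int_def conj_commute)
  show ?thesis
    using assms by (simp add: c) (rule sum.swap)
qed

lemma D_div:
  assumes "u \<in> dth_powers d" "v \<in> dth_powers d"
  shows "u / (v::'a::{field,finite}) \<in> dth_powers d"
proof -
  obtain a b where "a \<noteq> 0" "b \<noteq> 0" "u = a ^ d" "v = b ^ d" using assms by (auto simp: dth_powers_def)
  thus ?thesis unfolding dth_powers_def by (intro CollectI exI[of _ "a / b"]) (simp add: power_divide)
qed

lemma zero_notin_D: "(0::'a::{field,finite}) \<notin> dth_powers d"
  by (auto simp: dth_powers_def)

lemma clique_diff: "paley_clique d C \<Longrightarrow> x \<in> C \<Longrightarrow> y \<in> C \<Longrightarrow> x \<noteq> y \<Longrightarrow> x - y \<in> dth_powers d"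
  by (auto simp: paley_clique_def paley_adj_def)

lemma clique_bound:
  fixes t :: "'a::{field,finite}" and C :: "'a set"
  assumes t0: "t \<noteq> 0" and tD: "t \<notin> dth_powers d" and C: "paley_clique d C"
  shows "card C * card C \<le> card (UNIV :: 'a set)"
proof -
  have "inj_on (\<lambda>(a,b). a + t * b) (C \<times> C)"
  proof (rule inj_onI, clarsimp)
    fix a b a' b' assume hin: "a \<in> C" "b \<in> C" "a' \<in> C" "b' \<in> C" and eq: "a + t * b = a' + t * b'"
    show "a = a' \<and> b = b'"
    proof (cases "b = b'")
      case True thus ?thesis using eq by simp
    next
      case False
      hence "a - a' = t * (b' - b)" using eq by (simp add: algebra_simps)
      moreover have "b' - b \<noteq> 0" using False by simp
      ultimately have "t = (a - a') / (b' - b)" by (simp add: field_simps)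
      moreover have "a \<noteq> a'" using \<open>a - a' = t * (b' - b)\<close> t0 \<open>b' - b \<noteq> 0\<close> by auto
      ultimately have "t \<in> dth_powers d" using D_div clique_diff[OF C] hin False by metis
      thus ?thesis using tD by simp
    qed
  qed
  hence "card ((\<lambda>(a,b). a + t * b) ` (C \<times> C)) = card (C \<times> C)" by (rule card_image)
  moreover have "card ((\<lambda>(a,b). a + t * b) ` (C \<times> C)) \<le> card (UNIV :: 'a set)"
    by (rule card_mono) auto
  ultimately show ?thesis by (simp add: card_cartesian_product)
qed

context gfield
begin

lemma big_clique:
  assumes card: "card (UNIV::'a set) = r * r" and r1: "r > 1" and dr: "d dvd r + 1"
    and frob: "\<And>x y::'a. (x - y)^r = x^r - y^r"
  shows "\<exists>C::'a set. paley_clique d C \<and> card C = r"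
proof -
  define N where "N = card (UNIV::'a set) - 1"
  have NN: "N = (r+1)*(r-1)" unfolding N_def card using r1
    by (simp add: algebra_simps diff_mult_distrib2)
  have fixD: "z \<in> dth_powers d" if z0: "z \<noteq> 0" and zr: "z ^ r = z" for z :: 'a
  proof -
    obtain i where i: "z = g ^ i" using gen z0 by blast
    have "g ^ (i * r) = g ^ i" using zr i by (simp add: power_mult)
    hence "(i * r) mod N = i mod N" using g_pow_eq unfolding N_def by blast
    moreover have "i \<le> i * r" using r1 by simp
    ultimately have "N dvd i * r - i" using mod_eq_dvd_iff_nat[of i "i*r" N] by simp
    moreover have "i * r - i = i * (r - 1)" by (simp add: diff_mult_distrib2)
    ultimately have "(r+1)*(r-1) dvd i * (r-1)" using NN by simp
    moreover have "r - 1 \<noteq> 0" using r1 by simp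
    ultimately have "r + 1 dvd i" using dvd_times_right_cancel_iff[of "r-1" "r+1" i] by blast
    hence "d dvd i" using dr dvd_trans by blast
    thus ?thesis using gD i by simp
  qed
  define f where "f j = g ^ ((r+1) * j)" for j
  define C where "C = insert 0 (f ` {..<r-1})"
  have fr: "z ^ r = z" if zC: "z \<in> C" for z
  proof (cases "z = 0")
    case True thus ?thesis using r1 by simp
  next
    case False
    then obtain j where j: "z = f j" using zC unfolding C_def by blast
    have "(r+1)*j*r = (r+1)*j + N*j" unfolding NN using r1
      by (cases r) (simp_all add: algebra_simps)
    hence "((r+1)*j*r) mod N = ((r+1)*j) mod N" by simp
    hence "g ^ ((r+1)*j*r) = g ^ ((r+1)*j)" using g_pow_eq unfolding N_def by blast
    thus ?thesis unfolding j f_def by (simp add: power_mult)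
  qed
  have clique: "paley_clique d C"
    unfolding paley_clique_def paley_adj_def
  proof (intro ballI impI conjI)
    fix x y assume xy: "x \<in> C" "y \<in> C" "x \<noteq> y"
    show "x \<noteq> y" by fact
    have "(x - y) ^ r = x - y" using frob fr xy by simp
    thus "x - y \<in> dth_powers d" using fixD xy by simp
  qed
  have inj: "inj_on f {..<r-1}"
  proof
    fix i j assume ij: "i \<in> {..<r-1}" "j \<in> {..<r-1}" "f i = f j"
    have "(r+1)*i < (r+1)*(r-1)" using ij(1) by (intro mult_strict_left_mono) auto
    moreover have "(r+1)*j < (r+1)*(r-1)" using ij(2) by (intro mult_strict_left_mono) auto
    ultimately have "(r+1)*i < N" "(r+1)*j < N" using NN by simp_all
    moreover have "((r+1)*i) mod N = ((r+1)*j) mod N"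
      using ij(3) g_pow_eq unfolding f_def N_def by blast
    ultimately have "(r+1)*i = (r+1)*j" by simp
    thus "i = j" using mult_left_cancel[of "r+1" i j] by linarith
  qed
  have "0 \<notin> f ` {..<r-1}" using g0 unfolding f_def by auto
  hence "card C = Suc (r - 1)" unfolding C_def using card_image[OF inj] by simp
  hence "card C = r" using r1 by simp
  thus ?thesis using clique by blast
qed


lemma counting:
  fixes A :: "'a set"
  assumes card: "card (UNIV::'a set) = r * r" and r1: "r > 1"
    and A: "paley_clique d A" and cA: "card A = r"
  shows "d dvd r + 1"
proof -
  define D where "D = (dth_powers d :: 'a set)"
  define N where "N = card (UNIV::'a set) - 1"
  define s where "s = card D"
  have sd: "s * d = N" unfolding s_def D_def N_def card_D using dN by simp
  have NN: "N = r*r - 1" using card N_def by simp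
  have finA: "finite A" by simp
  define U where "U = UNIV - A"
  have cU: "card U = r*r - r"
  proof -
    have "card U = card (UNIV::'a set) - card A" unfolding U_def by (simp add: card_Diff_subset)
    thus ?thesis unfolding card cA .
  qed
  have D0: "0 \<notin> D" unfolding D_def by (rule zero_notin_D)
  have D1: "1 \<in> D" unfolding D_def dth_powers_def by (intro CollectI exI[of _ 1]) simp
  have Acl: "x - y \<in> D" if "x \<in> A" "y \<in> A" "x \<noteq> y" for x y
    using clique_diff[OF A that] unfolding D_def .
  define v where "v x = card {a\<in>A. x - a \<in> D}" for x
  define T where "T x = card {p\<in>A\<times>A. (x - fst p) / (x - snd p) \<in> D}" for x
  define S where "S x i = {a\<in>A. ind (x - a) = i}" for x i
  have finS: "finite (S x i)" for x i unfolding S_def by simp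
  have T_eq: "T x = (\<Sum>i<d. card (S x i) * card (S x i))" if xU: "x \<in> U" for x
  proof -
    have "{p\<in>A\<times>A. (x - fst p) / (x - snd p) \<in> D} = (\<Union>i\<in>{..<d}. S x i \<times> S x i)"
    proof (rule equalityI; rule subsetI)
      fix p assume "p \<in> {p\<in>A\<times>A. (x - fst p) / (x - snd p) \<in> D}"
      then obtain a b where p: "p = (a,b)" "a \<in> A" "b \<in> A" "(x - a) / (x - b) \<in> D" by auto
      have "x - a \<noteq> 0" "x - b \<noteq> 0" using xU p unfolding U_def by auto
      hence "ind (x - a) = ind (x - b)" using p(4) div_D_iff unfolding D_def by blast
      thus "p \<in> (\<Union>i\<in>{..<d}. S x i \<times> S x i)" using p ind_lt unfolding S_def by auto
    next
      fix p assume "p \<in> (\<Union>i\<in>{..<d}. S x i \<times> S x i)"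
      then obtain a b where p: "p = (a,b)" "a \<in> A" "b \<in> A" "ind (x - a) = ind (x - b)"
        unfolding S_def by auto
      have "x - a \<noteq> 0" "x - b \<noteq> 0" using xU p unfolding U_def by auto
      hence "(x - a) / (x - b) \<in> D" using p(4) div_D_iff unfolding D_def by blast
      thus "p \<in> {p\<in>A\<times>A. (x - fst p) / (x - snd p) \<in> D}" using p by auto
    qed
    hence "T x = card (\<Union>i\<in>{..<d}. S x i \<times> S x i)" unfolding T_def by simp
    also have "\<dots> = (\<Sum>i<d. card (S x i \<times> S x i))"
      by (rule card_UN_disjoint) (auto simp: finS S_def)
    finally show ?thesis by (simp add: card_cartesian_product)
  qed
  have sumS: "(\<Sum>i<d. card (S x i)) = r" for x
  proof -
    have "A = (\<Union>i\<in>{..<d}. S x i)" unfolding S_def using ind_lt by auto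
    hence "card A = card (\<Union>i\<in>{..<d}. S x i)" by simp
    also have "\<dots> = (\<Sum>i<d. card (S x i))"
      by (rule card_UN_disjoint) (auto simp: finS S_def)
    finally show ?thesis using cA by simp
  qed
  have S0: "card (S x 0) = v x" if xU: "x \<in> U" for x
  proof -
    have "S x 0 = {a\<in>A. x - a \<in> D}"
    proof -
      have "x - a \<noteq> 0" if "a \<in> A" for a using xU that unfolding U_def by auto
      thus ?thesis unfolding S_def D_def using in_D_iff_ind by blast
    qed
    thus ?thesis unfolding v_def by simp
  qed
  have cnt_shift: "card {x\<in>(UNIV::'a set). x - a \<in> D} = s" for a
  proof -
    have "{x\<in>(UNIV::'a set). x - a \<in> D} = (\<lambda>y. y + a) ` D" by force
    moreover have "inj_on (\<lambda>y. y + a) D" by (rule inj_onI) simp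
    ultimately show ?thesis unfolding s_def by (simp add: card_image)
  qed
  have vA: "v x = r - 1" if xA: "x \<in> A" for x
  proof -
    have "{a\<in>A. x - a \<in> D} = A - {x}" using Acl xA D0 by auto
    thus ?thesis unfolding v_def using xA cA by simp
  qed
  have V1: "(\<Sum>x\<in>U. v x) + r*(r-1) = r*s"
  proof -
    have "(\<Sum>x\<in>UNIV. v x) = (\<Sum>a\<in>A. card {x\<in>(UNIV::'a set). x - a \<in> D})"
      unfolding v_def by (rule double_count) simp_all
    also have "\<dots> = r * s" using cnt_shift cA by simp
    finally have 1: "(\<Sum>x\<in>UNIV. v x) = r * s" .
    have "(\<Sum>x\<in>UNIV. v x) = (\<Sum>x\<in>U. v x) + (\<Sum>x\<in>A. v x)"
      unfolding U_def by (rule sum.subset_diff) simp_all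
    moreover have "(\<Sum>x\<in>A. v x) = r*(r-1)" using vA cA by simp
    ultimately show ?thesis using 1 by simp
  qed
  have ratio_eq: "card {x\<in>(UNIV::'a set). (x - a) / (x - a) \<in> D} = N" for a
  proof -
    have "{x\<in>(UNIV::'a set). (x - a) / (x - a) \<in> D} = UNIV - {a}" using D0 D1 by auto
    thus ?thesis unfolding N_def by (simp add: card_Diff_singleton)
  qed
  have ratio_ne: "card {x\<in>(UNIV::'a set). (x - a) / (x - b) \<in> D} = s - 1" if ab: "a \<noteq> b" for a b
  proof -
    define X where "X = {x\<in>(UNIV::'a set). (x - a) / (x - b) \<in> D}"
    define f where "f x = (x - a) / (x - b)" for x
    have Xb: "x - b \<noteq> 0" if "x \<in> X" for x using that D0 unfolding X_def by auto
    have "inj_on f X"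
    proof
      fix x y assume xy: "x \<in> X" "y \<in> X" "f x = f y"
      have "(x - a) * (y - b) = (y - a) * (x - b)" using xy(3) Xb[OF xy(1)] Xb[OF xy(2)]
        unfolding f_def by (simp add: frac_eq_eq)
      hence "(a - b) * (x - y) = 0" by (simp add: algebra_simps)
      thus "x = y" using ab by simp
    qed
    moreover have "f ` X = D - {1}"
    proof (rule equalityI; rule subsetI)
      fix y assume "y \<in> f ` X"
      then obtain x where x: "x \<in> X" "y = f x" by blast
      have "y \<in> D" using x unfolding X_def f_def by simp
      moreover have "y \<noteq> 1"
      proof
        assume "y = 1"
        hence "x - a = x - b" using x Xb[OF x(1)] unfolding f_def by simp
        thus False using ab by simp
      qed
      ultimately show "y \<in> D - {1}" by simp
    next
      fix y assume y: "y \<in> D - {1}"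
      define x where "x = (a - b * y) / (1 - y)"
      have y1: "1 - y \<noteq> 0" using y by simp
      have e1: "x - a = y * (a - b) / (1 - y)" unfolding x_def using y1 by (simp add: field_simps)
      have e2: "x - b = (a - b) / (1 - y)" unfolding x_def using y1 by (simp add: field_simps)
      have "f x = (y * (a - b) / (1 - y)) / ((a - b) / (1 - y))" unfolding f_def e1 e2 ..
      also have "\<dots> = y"
      proof -
        have nz: "(a - b) / (1 - y) \<noteq> 0" using y1 ab by simp
        have "y * (a - b) / (1 - y) = y * ((a - b) / (1 - y))" by simp
        thus ?thesis using nonzero_mult_div_cancel_right[OF nz, of y] by (simp only:)
      qed
      finally have "f x = y" .
      moreover hence "x \<in> X" using y unfolding X_def f_def by simp
      ultimately show "y \<in> f ` X" by blast
    qed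
    ultimately have "card X = card (D - {1})" by (metis card_image)
    thus ?thesis unfolding X_def s_def using D1 by (simp add: card_Diff_singleton)
  qed
  have TA: "T c = (r-1)*(r-1)" if cA': "c \<in> A" for c
  proof -
    have "{p\<in>A\<times>A. (c - fst p) / (c - snd p) \<in> D} = (A - {c}) \<times> (A - {c})"
    proof (rule equalityI; rule subsetI)
      fix p assume "p \<in> {p\<in>A\<times>A. (c - fst p) / (c - snd p) \<in> D}"
      then obtain a b where p: "p = (a,b)" "a \<in> A" "b \<in> A" "(c - a) / (c - b) \<in> D" by auto
      have "a \<noteq> c" "b \<noteq> c" using p(4) D0 by auto
      thus "p \<in> (A - {c}) \<times> (A - {c})" using p by simp
    next
      fix p assume "p \<in> (A - {c}) \<times> (A - {c})"
      then obtain a b where p: "p = (a,b)" "a \<in> A" "b \<in> A" "a \<noteq> c" "b \<noteq> c" by auto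
      have "(c - a) / (c - b) \<in> D" using Acl[OF cA' p(2)] Acl[OF cA' p(3)] p(4,5) D_div
        unfolding D_def by metis
      thus "p \<in> {p\<in>A\<times>A. (c - fst p) / (c - snd p) \<in> D}" using p by simp
    qed
    thus ?thesis unfolding T_def using cA' cA by (simp add: card_cartesian_product)
  qed
  have W: "(\<Sum>x\<in>U. T x) + r*((r-1)*(r-1)) = r*(N + (r-1)*(s-1))"
  proof -
    have "(\<Sum>x\<in>UNIV. T x) = (\<Sum>p\<in>A\<times>A. card {x\<in>(UNIV::'a set). (x - fst p) / (x - snd p) \<in> D})"
      unfolding T_def by (rule double_count) simp_all
    also have "\<dots> = (\<Sum>p\<in>A\<times>A. if fst p = snd p then N else s - 1)"
    proof (rule sum.cong[OF refl])
      fix p :: "'a \<times> 'a"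
      show "card {x\<in>(UNIV::'a set). (x - fst p) / (x - snd p) \<in> D} = (if fst p = snd p then N else s - 1)"
      proof (cases "fst p = snd p")
        case True
        hence e: "snd p = fst p" by simp
        show ?thesis unfolding e by (subst ratio_eq) simp
      next
        case False
        thus ?thesis by (subst ratio_ne) simp_all
      qed
    qed
    also have "\<dots> = (\<Sum>a\<in>A. \<Sum>b\<in>A. if a = b then N else s - 1)"
      by (simp add: sum.cartesian_product case_prod_beta)
    also have "\<dots> = (\<Sum>a\<in>A. N + (r-1)*(s-1))"
    proof (rule sum.cong[OF refl])
      fix a assume aA: "a \<in> A"
      have "(\<Sum>b\<in>A. if a = b then N else s - 1) = (if a = a then N else s - 1) + (\<Sum>b\<in>A-{a}. if a = b then N else s - 1)"
        using aA by (simp add: sum.remove)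
      also have "(\<Sum>b\<in>A-{a}. if a = b then N else s - 1) = (\<Sum>b\<in>A-{a}. s - 1)"
        by (rule sum.cong) auto
      also have "\<dots> = (r-1)*(s-1)" using aA cA by simp
      finally show "(\<Sum>b\<in>A. if a = b then N else s - 1) = N + (r-1)*(s-1)" by simp
    qed
    also have "\<dots> = r*(N + (r-1)*(s-1))" using cA by simp
    finally have 1: "(\<Sum>x\<in>UNIV. T x) = r*(N + (r-1)*(s-1))" .
    have "(\<Sum>x\<in>UNIV. T x) = (\<Sum>x\<in>U. T x) + (\<Sum>x\<in>A. T x)"
      unfolding U_def by (rule sum.subset_diff) simp_all
    moreover have "(\<Sum>x\<in>A. T x) = r*((r-1)*(r-1))" using TA cA by simp
    ultimately show ?thesis using 1 by simp
  qed
  \<comment> \<open>Cauchy-Schwarz over the nontrivial cosets\<close>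
  have CS: "(int d - 1) * int (T x) \<ge> (int d - 1) * (int (v x))^2 + (int r - int (v x))^2"
    if xU: "x \<in> U" for x
  proof -
    define n where "n i = int (card (S x i))" for i
    have dd: "{..<d} = insert 0 {1..<d}" using dpos by auto
    have "int (T x) = (\<Sum>i<d. (n i)^2)" using T_eq[OF xU] unfolding n_def by (simp add: power2_eq_square)
    also have "\<dots> = (n 0)^2 + (\<Sum>i\<in>{1..<d}. (n i)^2)" unfolding dd by simp
    finally have T2: "int (T x) = (n 0)^2 + (\<Sum>i\<in>{1..<d}. (n i)^2)" .
    have "(\<Sum>i<d. n i) = int (\<Sum>i<d. card (S x i))" unfolding n_def by simp
    hence "int r = (\<Sum>i<d. n i)" using sumS[of x] by simp
    also have "\<dots> = n 0 + (\<Sum>i\<in>{1..<d}. n i)" unfolding dd by simp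
    finally have R2: "int r = n 0 + (\<Sum>i\<in>{1..<d}. n i)" .
    have n0: "n 0 = int (v x)" unfolding n_def using S0[OF xU] by simp
    have cs: "(\<Sum>i\<in>{1..<d}. n i)^2 \<le> (int d - 1) * (\<Sum>i\<in>{1..<d}. (n i)^2)"
      using cs_int[of "{1..<d}" n] dpos by (simp add: of_nat_diff)
    have "(int d - 1) * int (T x) = (int d - 1) * (n 0)^2 + (int d - 1) * (\<Sum>i\<in>{1..<d}. (n i)^2)"
      unfolding T2 by (simp add: distrib_left)
    moreover have "int r - int (v x) = (\<Sum>i\<in>{1..<d}. n i)" using R2 n0 by simp
    ultimately show ?thesis using cs n0 by simp
  qed
  define R where "R = int r"
  define Dd where "Dd = int d"
  define Sx where "Sx = int s"
  define vi where "vi x = int (v x)" for x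
  define ti where "ti x = int (T x)" for x
  define c where "c = R + 1 - Dd"
  have s1: "s \<ge> 1" unfolding s_def
  proof -
    have "D \<noteq> {}" using D1 by auto
    hence "card D > 0" by (simp add: card_gt_0_iff)
    thus "card D \<ge> 1" by simp
  qed
  have rr1: "1 \<le> r * r" using r1 by (simp add: Suc_le_eq)
  have "int (s * d) = int (r * r - 1)" using sd NN by (simp only:)
  hence hS: "Sx * Dd = R*R - 1" unfolding Sx_def Dd_def R_def using rr1 by (simp add: of_nat_diff)
  have hV: "(\<Sum>x\<in>U. vi x) = R*Sx - R*(R-1)"
  proof -
    have "int ((\<Sum>x\<in>U. v x) + r*(r-1)) = int (r*s)" using V1 by (simp only:)
    hence "int (\<Sum>x\<in>U. v x) + int r * (int r - 1) = int r * int s"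
      using r1 by (simp add: of_nat_diff)
    thus ?thesis unfolding vi_def R_def Sx_def by simp
  qed
  have hW: "(\<Sum>x\<in>U. ti x) = R*(R*R - 1 + (R-1)*(Sx-1)) - R*((R-1)*(R-1))"
  proof -
    have "int ((\<Sum>x\<in>U. T x) + r*((r-1)*(r-1))) = int (r*(N + (r-1)*(s-1)))" using W by (simp only:)
    hence "int (\<Sum>x\<in>U. T x) + int r * ((int r - 1) * (int r - 1)) = int r * ((int r * int r - 1) + (int r - 1) * (int s - 1))"
      using r1 s1 NN rr1 by (simp add: of_nat_diff)
    thus ?thesis unfolding ti_def R_def Sx_def by simp
  qed
  have hm: "int (card U) = R*R - R" unfolding R_def cU using r1 by (simp add: of_nat_diff)
  have ident: "(Dd * vi x - c)^2 = Dd * ((Dd - 1) * (vi x)^2 + (R - vi x)^2 - (Dd - 1) * ti x)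
      + (2*Dd*(Dd - 1)*vi x + (c^2 - Dd*R^2) + Dd*(Dd - 1)*ti x)" for x
    unfolding c_def power2_eq_square by (simp add: algebra_simps)
  have "(\<Sum>x\<in>U. (Dd * vi x - c)^2) = Dd * (\<Sum>x\<in>U. (Dd - 1) * (vi x)^2 + (R - vi x)^2 - (Dd - 1) * ti x)
      + (2*Dd*(Dd - 1)*(\<Sum>x\<in>U. vi x) + int (card U) * (c^2 - Dd*R^2) + Dd*(Dd - 1)*(\<Sum>x\<in>U. ti x))"
    unfolding ident by (simp add: sum.distrib sum_distrib_left)
  also have "2*Dd*(Dd - 1)*(\<Sum>x\<in>U. vi x) + int (card U) * (c^2 - Dd*R^2) + Dd*(Dd - 1)*(\<Sum>x\<in>U. ti x)
      = (Dd - 1)*R*(R+1)*(Sx*Dd - (R*R - 1))"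
    unfolding hV hW hm c_def power2_eq_square by (simp add: algebra_simps)
  also have "\<dots> = 0" using hS by simp
  finally have eqS: "(\<Sum>x\<in>U. (Dd * vi x - c)^2) = Dd * (\<Sum>x\<in>U. (Dd - 1) * (vi x)^2 + (R - vi x)^2 - (Dd - 1) * ti x)"
    by simp
  have le0: "(\<Sum>x\<in>U. (Dd - 1) * (vi x)^2 + (R - vi x)^2 - (Dd - 1) * ti x) \<le> 0"
  proof (rule sum_nonpos)
    fix x assume "x \<in> U"
    from CS[OF this] show "(Dd - 1) * (vi x)^2 + (R - vi x)^2 - (Dd - 1) * ti x \<le> 0"
      unfolding vi_def ti_def R_def Dd_def by linarith
  qed
  have "Dd \<ge> 0" unfolding Dd_def by simp
  from mult_nonneg_nonpos[OF this le0]
  have sle: "(\<Sum>x\<in>U. (Dd * vi x - c)^2) \<le> 0" unfolding eqS .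
  have sge: "(\<Sum>x\<in>U. (Dd * vi x - c)^2) \<ge> 0" by (rule sum_nonneg) simp
  have "(\<Sum>x\<in>U. (Dd * vi x - c)^2) = 0" using sle sge by (rule antisym)
  hence all0: "\<forall>x\<in>U. (Dd * vi x - c)^2 = 0"
    by (subst (asm) sum_nonneg_eq_0_iff) simp_all
  have "r*r - r = r*(r-1)" by (simp add: diff_mult_distrib2)
  hence "card U > 0" unfolding cU using r1 by simp
  hence "U \<noteq> {}" by (simp add: card_gt_0_iff)
  then obtain x where xU: "x \<in> U" by blast
  hence "Dd * vi x = c" using all0 by simp
  hence "R + 1 = Dd * (vi x + 1)" unfolding c_def by (simp add: algebra_simps)
  hence "int (r + 1) = int d * (vi x + 1)" unfolding R_def Dd_def by simp
  hence "int d dvd int (r + 1)" by (rule dvdI)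
  thus ?thesis by (simp only: int_dvd_int_iff)
qed

end


lemma frob_odd:
  fixes p k :: nat
  assumes "prime p" "odd p" "k \<ge> 1" "card (UNIV :: 'a::{field,finite} set) = p ^ (2 * k)"
  shows "\<And>x y :: 'a. (x - y) ^ (p ^ k) = x ^ (p ^ k) - y ^ (p ^ k)"
proof -
  fix x y :: 'a
  have pos: "CHAR('a) > 0" by (rule finite_imp_CHAR_pos) simp
  hence pc: "prime CHAR('a)" by (rule prime_CHAR_semidom)
  have "CHAR('a) dvd p ^ (2 * k)" using CHAR_dvd_CARD[where ?'a = 'a] assms(4) by simp
  hence "CHAR('a) dvd p" using pc prime_dvd_power by blast
  hence cp: "CHAR('a) = p" using pc assms(1) primes_dvd_imp_eq by blast
  have "(x + (- y)) ^ (p ^ k) = x ^ (p ^ k) + (- y) ^ (p ^ k)"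
    by (rule freshmans_dream') (use pc cp in simp_all)
  moreover have "odd (p ^ k)" using assms(2) by simp
  ultimately show "(x - y) ^ (p ^ k) = x ^ (p ^ k) - y ^ (p ^ k)" by simp
qed

theorem theorem1p6:
  fixes p d k :: nat
  assumes "prime p" and "odd p" and "d > 1" and "k \<ge> 1"
    and "card (UNIV :: 'a::{field,finite} set) = p ^ (2 * k)"
    and "[card (UNIV :: 'a set) = 1] (mod (2 * d))"
  shows "(paley_clique_number TYPE('a) d = p ^ k \<longleftrightarrow> d dvd (p ^ k + 1))
         \<and> (\<not> d dvd (p ^ k + 1) \<longrightarrow> paley_clique_number TYPE('a) d \<le> p ^ k - 1)"
proof -
  define r where "r = p ^ k"
  have card: "card (UNIV :: 'a set) = r * r" unfolding r_def using assms(5)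
    by (simp add: mult_2 power_add)
  have p2: "p \<ge> 2" using assms(1) by (simp add: prime_ge_2_nat)
  have "p ^ 1 \<le> p ^ k" using assms(4) p2 by (intro power_increasing) simp_all
  hence r1: "r > 1" unfolding r_def using p2 by simp
  have "2 * d dvd card (UNIV :: 'a set) - 1"
    using assms(6) cong_altdef_nat[of 1 "card (UNIV :: 'a set)" "2*d"] card r1 by simp
  hence dN: "d dvd card (UNIV :: 'a set) - 1" by (rule dvd_mult_right)
  obtain g :: 'a where g0: "g \<noteq> 0" and gen: "\<And>x. x \<noteq> 0 \<Longrightarrow> \<exists>i. x = g ^ i"
    using exists_gen by blast
  interpret G: gfield g d using g0 gen dN assms(3) by unfold_locales simp_all
  define Cl where "Cl = {card C | C :: 'a set. paley_clique d C}"
  have om: "paley_clique_number TYPE('a) d = Max Cl" unfolding Cl_def paley_clique_number_def ..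
  have finCl: "finite Cl"
  proof (rule finite_subset)
    show "Cl \<subseteq> {..card (UNIV :: 'a set)}" unfolding Cl_def by (auto intro: card_mono)
  qed simp
  have neCl: "Cl \<noteq> {}"
  proof -
    have "paley_clique d ({} :: 'a set)" by (simp add: paley_clique_def)
    thus ?thesis unfolding Cl_def by blast
  qed
  obtain t :: 'a where t0: "t \<noteq> 0" and tD: "t \<notin> dth_powers d"
  proof -
    define N where "N = card (UNIV :: 'a set) - 1"
    have "1 * 1 < r * r" using r1 by (intro mult_strict_mono) simp_all
    hence Npos: "N > 0" unfolding N_def card by simp
    have "N div d < N" using Npos assms(3) by simp
    hence "card (dth_powers d :: 'a set) < card (UNIV - {0 :: 'a})"
      using G.card_D unfolding N_def by (simp add: card_Diff_singleton)
    hence "\<not> (UNIV - {0 :: 'a}) \<subseteq> dth_powers d"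
    proof (intro notI)
      assume "card (dth_powers d :: 'a set) < card (UNIV - {0 :: 'a})" "(UNIV - {0 :: 'a}) \<subseteq> dth_powers d"
      moreover from this(2) have "card (UNIV - {0 :: 'a}) \<le> card (dth_powers d :: 'a set)"
        by (intro card_mono) simp_all
      ultimately show False by simp
    qed
    thus ?thesis using that by blast
  qed
  have upper: "c \<le> r" if "c \<in> Cl" for c
  proof -
    obtain C :: "'a set" where C: "paley_clique d C" "c = card C" using \<open>c \<in> Cl\<close> unfolding Cl_def by blast
    have "c * c \<le> r * r" using clique_bound[OF t0 tD C(1)] C(2) card by simp
    show "c \<le> r"
    proof (rule ccontr)
      assume "\<not> c \<le> r"
      hence "r < c" by simp
      hence "r * r < c * c" by (intro mult_strict_mono) simp_all
      thus False using \<open>c * c \<le> r * r\<close> by simp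
    qed
  qed
  have om_le: "paley_clique_number TYPE('a) d \<le> r"
    unfolding om using finCl neCl upper by simp
  have iff: "paley_clique_number TYPE('a) d = r \<longleftrightarrow> d dvd r + 1"
  proof
    assume "paley_clique_number TYPE('a) d = r"
    hence "r \<in> Cl" using Max_in[OF finCl neCl] om by simp
    then obtain A :: "'a set" where "paley_clique d A" "card A = r" unfolding Cl_def by blast
    thus "d dvd r + 1" using G.counting[OF card r1] by blast
  next
    assume "d dvd r + 1"
    from G.big_clique[OF card r1 this frob_odd[OF assms(1,2,4,5), folded r_def]]
    obtain C :: "'a set" where "paley_clique d C" "card C = r" by blast
    hence "r \<in> Cl" unfolding Cl_def by blast
    hence "r \<le> Max Cl" using finCl by simp
    thus "paley_clique_number TYPE('a) d = r" using om om_le by simp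
  qed
  show ?thesis using iff om_le unfolding r_def by auto
qed

end
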